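(* Let $n\ge2$, $d\ge1$, $k\ge1$, $V\in\mathcal{C}^{k+1}(\mathbb{R}^d,\mathbb{R})$ and $u_0\in\mathbb{R}^d$. Let $u$ be the unique solution of $\ddot u(r)=-\frac{n-1}{r}\dot u(r)+\nabla V(u(r))$ such that $(u(r),\dot u(r))\to(u_0,0)$ as $r\to0^+$, assume it is defined on $(0,+\infty)$, and still denote by $u$ its continuous extension to $[0,+\infty)$. If $u$ is not identically equal to $u_0$ (equivalently, $u_0$ is not a critical point of $V$), then there exists $r_{\mathrm{once}}>0$ such that: (1) $\dot u(r)\neq0$ for every $r\in(0,r_{\mathrm{once}})$; (2) for every $r^*\in[0,r_{\mathrm{once}})$ and every $r\in[0,+\infty)$, $u(r)=u(r^* )$ implies $r=r^*$. *)

theory Defs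
  imports "HOL-Analysis.Analysis"
begin

fun Ck :: "nat \<Rightarrow> ('a::euclidean_space \<Rightarrow> 'b::real_normed_vector) \<Rightarrow> bool" where
  "Ck 0 f = continuous_on UNIV f"
| "Ck (Suc m) f = ((\<forall>x. f differentiable (at x)) \<and>
      (\<forall>i\<in>Basis. Ck m (\<lambda>x. frechet_derivative f (at x) i)))"

definition grad :: "('a::euclidean_space \<Rightarrow> real) \<Rightarrow> 'a \<Rightarrow> 'a" where
  "grad V x = (\<Sum>i\<in>Basis. frechet_derivative V (at x) i *\<^sub>R i)"

end

theory Submission
  imports Defs
begin

lemma Ck_cont: "Ck m f \<Longrightarrow> continuous_on UNIV f"
  by (cases m) (auto intro!: differentiable_imp_continuous_on simp: differentiable_on_def)

lemma grad_eq: "grad V = (\<lambda>x. \<Sum>i\<in>Basis. frechet_derivative V (at x) i *\<^sub>R i)"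
  by (rule ext) (simp add: grad_def)

lemma grad_diff: "Ck (Suc (Suc m)) V \<Longrightarrow> grad V differentiable (at x)"
  unfolding grad_eq
  by (intro differentiable_sum differentiable_scaleR ballI) auto

lemma grad_inner:
  assumes "V differentiable (at x)"
  shows "frechet_derivative V (at x) h = grad V x \<bullet> h"
proof -
  have lin: "linear (frechet_derivative V (at x))" using linear_frechet_derivative[OF assms] .
  have "frechet_derivative V (at x) h = frechet_derivative V (at x) (\<Sum>i\<in>Basis. (h \<bullet> i) *\<^sub>R i)"
    by (simp add: euclidean_representation)
  also have "\<dots> = (\<Sum>i\<in>Basis. (h \<bullet> i) * frechet_derivative V (at x) i)"
    using lin by (simp add: linear_sum linear_scale)
  also have "\<dots> = grad V x \<bullet> h"
    by (simp add: grad_def inner_commute[of _ h] inner_sum_right mult.commute)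
  finally show ?thesis .
qed

lemma diff_ptwise:
  assumes "g differentiable (at x0)"
  shows "\<exists>L>0. \<exists>\<rho>>0. \<forall>y. norm (y - x0) \<le> \<rho> \<longrightarrow> norm (g y - g x0) \<le> L * norm (y - x0)"
proof -
  obtain g' where d: "(g has_derivative g') (at x0)" using assms unfolding differentiable_def by blast
  then have bl: "bounded_linear g'" and
    e: "\<forall>e>0. \<exists>d>0. \<forall>y. norm(y - x0) < d \<longrightarrow> norm (g y - g x0 - g'(y - x0)) \<le> e * norm (y - x0)"
    unfolding has_derivative_at_alt by auto
  obtain K where K: "\<And>h. norm (g' h) \<le> norm h * K" "K > 0"
    using bounded_linear.pos_bounded[OF bl] by blast
  obtain d where d: "d > 0" "\<And>y. norm(y - x0) < d \<Longrightarrow> norm (g y - g x0 - g'(y - x0)) \<le> 1 * norm (y - x0)"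
    using e by (meson zero_less_one)
  have "\<forall>y. norm (y - x0) \<le> d/2 \<longrightarrow> norm (g y - g x0) \<le> (K+1) * norm (y - x0)"
  proof (intro allI impI)
    fix y assume "norm (y - x0) \<le> d/2"
    then have "norm (g y - g x0 - g'(y - x0)) \<le> norm (y - x0)" using d by simp
    moreover have "norm (g y - g x0) \<le> norm (g y - g x0 - g'(y - x0)) + norm (g'(y - x0))"
      by (metis diff_add_cancel norm_triangle_ineq)
    ultimately show "norm (g y - g x0) \<le> (K+1) * norm (y - x0)"
      using K(1)[of "y - x0"] by (simp add: algebra_simps)
  qed
  then show ?thesis using K d by (intro exI[of _ "K+1"] conjI exI[of _ "d/2"]) auto
qed

lemma mvt_bnd:
  fixes f :: "real \<Rightarrow> 'a::real_normed_vector"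
  assumes "a < b" "\<And>x. a \<le> x \<Longrightarrow> x \<le> b \<Longrightarrow> (f has_vector_derivative f' x) (at x)"
    "\<And>x. a < x \<Longrightarrow> x < b \<Longrightarrow> norm (f' x) \<le> B"
  shows "norm (f b - f a) \<le> B * (b - a)"
proof -
  have c: "continuous_on {a..b} f"
    using assms(2) by (intro continuous_at_imp_continuous_on ballI has_vector_derivative_continuous) auto
  have "norm (f b - f a) \<le> B * b - B * a"
    by (rule differentiable_bound_general[OF assms(1) c, of "\<lambda>x. B * x" f' "\<lambda>x. B"])
      (auto intro!: continuous_intros derivative_eq_intros assms(2,3))
  then show ?thesis by (simp add: algebra_simps)
qed

lemma lim_bnd:
  fixes F :: "real \<Rightarrow> 'a::real_normed_vector"
  assumes "(F \<longlongrightarrow> l) (at_right a)" "a < s" "\<And>t. a < t \<Longrightarrow> t < s \<Longrightarrow> norm (F s - F t) \<le> B * (s - t)"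
  shows "norm (F s - l) \<le> B * (s - a)"
proof -
  have "((\<lambda>t. norm (F s - F t) - B * (s - t)) \<longlongrightarrow> norm (F s - l) - B * (s - a)) (at_right a)"
    by (intro tendsto_intros assms(1))
  moreover have "eventually (\<lambda>t. norm (F s - F t) - B * (s - t) \<le> 0) (at_right a)"
    unfolding eventually_at_right_field using assms(2,3) by (intro exI[of _ s]) auto
  ultimately have "norm (F s - l) - B * (s - a) \<le> 0"
    by (rule tendsto_upperbound) (simp add: trivial_limit_at_right_real)
  then show ?thesis by simp
qed

lemma uniq_local:
  fixes u du :: "real \<Rightarrow> 'a::euclidean_space" and g :: "'a \<Rightarrow> 'a"
  assumes hS: "\<And>s. s > 0 \<Longrightarrow> ((\<lambda>s. s^m *\<^sub>R du s) has_vector_derivative s^m *\<^sub>R g (u s)) (at s)"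
    and hu: "\<And>s. s > 0 \<Longrightarrow> (u has_vector_derivative du s) (at s)"
    and a: "a \<ge> 0" and L: "L > 0" and rho: "\<rho> > 0"
    and hL: "\<And>y. norm (y - u0) \<le> \<rho> \<Longrightarrow> norm (g y) \<le> L * norm (y - u0)"
    and l1: "(u \<longlongrightarrow> u0) (at_right a)" and l2: "((\<lambda>s. s^m *\<^sub>R du s) \<longlongrightarrow> 0) (at_right a)"
  shows "\<exists>h>0. \<forall>s\<in>{a<..a+h}. u s = u0"
proof -
  have "eventually (\<lambda>s. dist (u s) u0 < \<rho>) (at_right a)" using tendstoD[OF l1 rho] .
  then obtain b where b: "b > a" "\<And>s. a < s \<Longrightarrow> s < b \<Longrightarrow> norm (u s - u0) \<le> \<rho>"
    unfolding eventually_at_right_field dist_norm by (metis less_imp_le)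
  define h where "h = min (min ((b-a)/2) 1) (1/(2*L))"
  have h0: "h > 0" using b L by (simp add: h_def)
  have hb: "a + h < b" proof - have "h \<le> (b-a)/2" unfolding h_def by (metis min.coboundedI1 min.cobounded1) then show ?thesis using b(1) by (simp add: field_simps) qed
  have h1: "h \<le> 1" by (simp add: h_def)
  have Lh: "L * h \<le> 1/2"
  proof -
    have "h \<le> 1/(2*L)" by (simp add: h_def)
    then have "L * h \<le> L * (1/(2*L))" using L by (intro mult_left_mono) auto
    then show ?thesis using L by simp
  qed
  define I where "I = {a<..a+h}"
  have Ine: "I \<noteq> {}" using h0 by (auto simp: I_def)
  have Ib: "\<And>s. s \<in> I \<Longrightarrow> norm (u s - u0) \<le> \<rho>" using b hb by (auto simp: I_def)
  define W where "W = (SUP s\<in>I. norm (u s - u0))"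
  have bdd: "bdd_above ((\<lambda>s. norm (u s - u0)) ` I)"
    using Ib by (intro bdd_aboveI[of _ \<rho>]) auto
  have Wup: "\<And>s. s \<in> I \<Longrightarrow> norm (u s - u0) \<le> W"
    unfolding W_def using bdd by (rule cSUP_upper2) auto
  have W0: "W \<ge> 0" using Wup[of "a+h"] h0 by (simp add: I_def) (meson norm_ge_zero order_trans)
  have c1: "norm (du s) \<le> L * W * h" if s: "s \<in> I" for s
  proof -
    have s0: "s > 0" "a < s" "s \<le> a + h" using s a by (auto simp: I_def)
    have "norm (s^m *\<^sub>R du s - 0) \<le> (s^m * (L * W)) * (s - a)"
    proof (rule lim_bnd[OF l2 s0(2)])
      fix t assume t: "a < t" "t < s"
      show "norm (s^m *\<^sub>R du s - t^m *\<^sub>R du t) \<le> s^m * (L * W) * (s - t)"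
      proof (rule mvt_bnd[OF t(2)])
        fix x assume "t \<le> x" "x \<le> s"
        then show "((\<lambda>s. s^m *\<^sub>R du s) has_vector_derivative x^m *\<^sub>R g (u x)) (at x)"
          using t a by (intro hS) auto
      next
        fix x assume x: "t < x" "x < s"
        have xI: "x \<in> I" using x t s0 by (auto simp: I_def)
        have "norm (g (u x)) \<le> L * norm (u x - u0)" using hL Ib[OF xI] by blast
        also have "\<dots> \<le> L * W" using Wup[OF xI] L by (intro mult_left_mono) auto
        finally have g: "norm (g (u x)) \<le> L * W" .
        have "x^m \<le> s^m" using x t a by (intro power_mono) auto
        then have "x^m * norm (g (u x)) \<le> s^m * (L * W)"
          using g x t a by (intro mult_mono) auto
        then show "norm (x^m *\<^sub>R g (u x)) \<le> s^m * (L * W)"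
          using x t a by simp
      qed
    qed
    then have "s^m * norm (du s) \<le> s^m * (L * W * (s - a))"
      using s0 by (simp add: mult_ac)
    then have "norm (du s) \<le> L * W * (s - a)" using s0 by (simp add: mult_le_cancel_left)
    also have "\<dots> \<le> L * W * h" using s0 L W0 by (intro mult_left_mono) auto
    finally show ?thesis .
  qed
  have c2: "norm (u s - u0) \<le> L * W * h * h" if s: "s \<in> I" for s
  proof -
    have s0: "s > 0" "a < s" "s \<le> a + h" using s a by (auto simp: I_def)
    have "norm (u s - u0) \<le> (L * W * h) * (s - a)"
    proof (rule lim_bnd[OF l1 s0(2)])
      fix t assume t: "a < t" "t < s"
      show "norm (u s - u t) \<le> L * W * h * (s - t)"
      proof (rule mvt_bnd[OF t(2)])
        fix x assume "t \<le> x" "x \<le> s"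
        then show "(u has_vector_derivative du x) (at x)"
          using t a by (intro hu) auto
      next
        fix x assume x: "t < x" "x < s"
        have xI: "x \<in> I" using x t s0 by (auto simp: I_def)
        show "norm (du x) \<le> L * W * h" using c1[OF xI] .
      qed
    qed
    also have "\<dots> \<le> L * W * h * h" using s0 L W0 h0 by (intro mult_left_mono) auto
    finally show ?thesis .
  qed
  have "L * W * h * h \<le> W / 2"
  proof -
    have "L * W * h * h = W * (L * h) * h" by (simp add: mult_ac)
    also have "\<dots> \<le> W * (1/2) * 1" using W0 Lh h1 h0 L
      by (intro mult_mono) (auto intro: mult_nonneg_nonneg)
    finally show ?thesis by simp
  qed
  moreover have "(SUP s\<in>I. norm (u s - u0)) \<le> L * W * h * h"
    by (rule cSUP_least[OF Ine]) (rule c2)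
  ultimately have "W \<le> W / 2" unfolding W_def[symmetric] by linarith
  then have W00: "W = 0" using W0 by simp
  show ?thesis
    using h0 Wup W00 by (intro exI[of _ h]) (auto simp: I_def)
qed

lemma uniq_global:
  fixes u du :: "real \<Rightarrow> 'a::euclidean_space" and g :: "'a \<Rightarrow> 'a"
  assumes hS: "\<And>s. s > 0 \<Longrightarrow> ((\<lambda>s. s^m *\<^sub>R du s) has_vector_derivative s^m *\<^sub>R g (u s)) (at s)"
    and hu: "\<And>s. s > 0 \<Longrightarrow> (u has_vector_derivative du s) (at s)"
    and L: "L > 0" and rho: "\<rho> > 0"
    and hL: "\<And>y. norm (y - u0) \<le> \<rho> \<Longrightarrow> norm (g y) \<le> L * norm (y - u0)"
    and l1: "(u \<longlongrightarrow> u0) (at_right 0)" and l2: "((\<lambda>s. s^m *\<^sub>R du s) \<longlongrightarrow> 0) (at_right 0)"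
    and u00: "u 0 = u0"
  shows "\<forall>r\<ge>0. u r = u0"
proof (rule ccontr)
  assume "\<not> (\<forall>r\<ge>0. u r = u0)"
  then obtain r0 where r0: "r0 \<ge> 0" "u r0 \<noteq> u0" by auto
  define S where "S = {t. t \<ge> 0 \<and> (\<forall>s\<in>{0..t}. u s = u0)}"
  define T where "T = Sup S"
  have S0: "0 \<in> S" using u00 by (auto simp: S_def)
  have Sb: "\<And>t. t \<in> S \<Longrightarrow> t \<le> r0"
  proof (rule ccontr)
    fix t assume "t \<in> S" "\<not> t \<le> r0"
    then show False using r0 by (auto simp: S_def)
  qed
  have bdd: "bdd_above S" using Sb by (intro bdd_aboveI) auto
  have T0: "T \<ge> 0" unfolding T_def using S0 bdd by (rule cSup_upper)
  have below: "u s = u0" if sT: "0 \<le> s" "s < T" for s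
  proof -
    have "\<exists>t\<in>S. s < t" using less_cSupD[of S s] S0 sT(2) by (auto simp: T_def)
    then obtain t where "t \<in> S" "s < t" by blast
    then show ?thesis using sT by (auto simp: S_def)
  qed
  have du0: "du s = 0" if "0 < s" "s < T" for s
  proof -
    have "((\<lambda>_. u0) has_vector_derivative 0) (at s)" by simp
    then have "(u has_vector_derivative 0) (at s)"
      by (rule has_vector_derivative_transform_within_open[of _ _ _ "{0<..<T}"])
         (use that below in auto)
    then show ?thesis using hu[OF that(1)] vector_derivative_unique_at by blast
  qed
  have uT: "u T = u0 \<and> (u \<longlongrightarrow> u0) (at_right T) \<and> ((\<lambda>s. s^m *\<^sub>R du s) \<longlongrightarrow> 0) (at_right T)"
  proof (cases "T = 0")
    case True
    then show ?thesis using u00 l1 l2 by simp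
  next
    case False
    then have Tp: "T > 0" using T0 by simp
    have ev: "eventually (\<lambda>s. s \<in> {0<..<T}) (at_left T)"
      using Tp unfolding eventually_at_left_field by (intro exI[of _ 0]) auto
    have cu: "(u \<longlongrightarrow> u T) (at T)"
      using has_vector_derivative_continuous[OF hu[OF Tp]] by (simp add: continuous_at)
    have cS: "((\<lambda>s. s^m *\<^sub>R du s) \<longlongrightarrow> T^m *\<^sub>R du T) (at T)"
      using has_vector_derivative_continuous[OF hS[OF Tp]] by (simp add: continuous_at)
    have "(u \<longlongrightarrow> u0) (at_left T)"
      by (rule tendsto_eventually, rule eventually_mono[OF ev]) (auto intro: below)
    moreover have "(u \<longlongrightarrow> u T) (at_left T)" using cu filterlim_at_split by blast
    ultimately have a1: "u T = u0" using tendsto_unique[OF trivial_limit_at_left_real] by blast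
    have "((\<lambda>s. s^m *\<^sub>R du s) \<longlongrightarrow> 0) (at_left T)"
      by (rule tendsto_eventually, rule eventually_mono[OF ev]) (auto intro: du0)
    moreover have "((\<lambda>s. s^m *\<^sub>R du s) \<longlongrightarrow> T^m *\<^sub>R du T) (at_left T)" using cS filterlim_at_split by blast
    ultimately have a2: "T^m *\<^sub>R du T = 0" using tendsto_unique[OF trivial_limit_at_left_real] by blast
    show ?thesis using a1 a2 cu cS filterlim_at_split by metis
  qed
  obtain h where h: "h > 0" "\<And>s. s \<in> {T<..T+h} \<Longrightarrow> u s = u0"
    using uniq_local[OF hS hu T0 L rho hL] uT by blast
  have "T + h \<in> S"
    unfolding S_def
  proof (intro CollectI conjI ballI)
    show "0 \<le> T + h" using T0 h by simp
    fix s assume s: "s \<in> {0..T+h}"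
    show "u s = u0"
    proof (cases "s < T")
      case True then show ?thesis using below s by auto
    next
      case False
      then show ?thesis using uT h s by (cases "s = T") auto
    qed
  qed
  then have "T + h \<le> T" unfolding T_def using bdd by (rule cSup_upper)
  then show False using h by simp
qed

theorem lemma2p3:
  fixes n k :: nat
    and V :: "'a::euclidean_space \<Rightarrow> real"
    and u du :: "real \<Rightarrow> 'a"
    and u0 :: 'a
  assumes "n \<ge> 2" and "k \<ge> 1"
    and "Ck (k + 1) V"
    and "\<forall>r>0. (u has_vector_derivative du r) (at r) \<and>
           (du has_vector_derivative (- (real n - 1) / r) *\<^sub>R du r + grad V (u r)) (at r)"
    and "(u \<longlongrightarrow> u0) (at_right 0)"
    and "(du \<longlongrightarrow> 0) (at_right 0)"
    and "u 0 = u0"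
    and "\<exists>r\<ge>0. u r \<noteq> u0"
  shows "\<exists>r_once>0. (\<forall>r\<in>{0<..<r_once}. du r \<noteq> 0) \<and>
           (\<forall>r_star\<in>{0..<r_once}. \<forall>r\<ge>0. u r = u r_star \<longrightarrow> r = r_star)"
proof -
  obtain m where nm: "n = Suc (Suc m)" using assms(1) by (metis add_2_eq_Suc le_Suc_ex)
  have rn: "real n = real m + 2" using nm by simp
  define g where "g = grad V"
  have Ck2: "Ck (Suc (Suc (k - 1))) V" using assms(2,3) by (simp add: Suc_diff_le)
  have Vd: "\<And>x. V differentiable (at x)" using Ck2 by simp
  have gd: "\<And>x. g differentiable (at x)" unfolding g_def using grad_diff[OF Ck2] .
  have gc: "\<And>x. isCont g x" using gd by (simp add: differentiable_imp_continuous_within)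
  have Vc: "\<And>x. isCont V x" using Vd by (simp add: differentiable_imp_continuous_within)
  have hu: "\<And>s. s > 0 \<Longrightarrow> (u has_vector_derivative du s) (at s)" using assms(4) by blast
  have hdu: "\<And>s. s > 0 \<Longrightarrow> (du has_vector_derivative (- (real m + 1) / s) *\<^sub>R du s + g (u s)) (at s)"
  proof -
    fix s :: real assume s: "s > 0"
    have e: "real n - 1 = real m + 1" using rn by simp
    show "(du has_vector_derivative (- (real m + 1) / s) *\<^sub>R du s + g (u s)) (at s)"
      using assms(4) s unfolding g_def e[symmetric] by blast
  qed
  have hS: "\<And>s. s > 0 \<Longrightarrow> ((\<lambda>s. s^Suc m *\<^sub>R du s) has_vector_derivative s^Suc m *\<^sub>R g (u s)) (at s)"
  proof -
    fix s :: real assume s: "s > 0"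
    have d: "((\<lambda>s. s^Suc m *\<^sub>R du s) has_vector_derivative
       (s^Suc m *\<^sub>R ((- (real m + 1) / s) *\<^sub>R du s + g (u s)) + (real (Suc m) * s^(Suc m - Suc 0)) *\<^sub>R du s)) (at s)"
      by (intro has_vector_derivative_scaleR DERIV_pow hdu s)
    have co: "s^Suc m * (- (real m + 1) / s) = - (real (Suc m) * s^m)" using s by (simp add: field_simps)
    have "s^Suc m *\<^sub>R ((- (real m + 1) / s) *\<^sub>R du s + g (u s)) + (real (Suc m) * s^(Suc m - Suc 0)) *\<^sub>R du s
        = s^Suc m *\<^sub>R g (u s)"
      using co by (simp add: scaleR_add_right)
    then show "((\<lambda>s. s^Suc m *\<^sub>R du s) has_vector_derivative s^Suc m *\<^sub>R g (u s)) (at s)"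
      using d by simp
  qed
  have l2: "((\<lambda>s. s^Suc m *\<^sub>R du s) \<longlongrightarrow> 0) (at_right 0)"
  proof -
    have "((\<lambda>s. s^Suc m *\<^sub>R du s) \<longlongrightarrow> 0^Suc m *\<^sub>R 0) (at_right 0)"
      by (intro tendsto_intros assms(6))
    then show ?thesis by simp
  qed
  define c where "c = g u0"
  have c0: "c \<noteq> 0"
  proof
    assume c: "c = 0"
    obtain L \<rho> where L: "L > 0" "\<rho> > 0" "\<And>y. norm (y - u0) \<le> \<rho> \<Longrightarrow> norm (g y - g u0) \<le> L * norm (y - u0)"
      using diff_ptwise[OF gd[of u0]] by blast
    have "\<forall>r\<ge>0. u r = u0"
      by (rule uniq_global[OF hS hu L(1,2) _ assms(5) l2 assms(7)]) (use L(3) c c_def in auto)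
    then show False using assms(8) by blast
  qed
  define a where "a = norm c / real n"
  define \<epsilon> where "\<epsilon> = a / 4"
  have np: "real n > 0" using rn by simp
  have a0: "a > 0" using c0 np by (simp add: a_def)
  have e0: "\<epsilon> > 0" using a0 by (simp add: \<epsilon>_def)
  have cn: "norm c = a * real n" using np by (simp add: a_def)
  have "((\<lambda>s. g (u s)) \<longlongrightarrow> c) (at_right 0)"
    unfolding c_def by (rule isCont_tendsto_compose[OF gc assms(5)])
  from tendstoD[OF this e0] obtain b where b: "b > 0" "\<And>s. 0 < s \<Longrightarrow> s < b \<Longrightarrow> dist (g (u s)) c < \<epsilon>"
    unfolding eventually_at_right_field by auto
  define \<delta> where "\<delta> = b / 2"
  have d0: "\<delta> > 0" using b by (simp add: \<delta>_def)
  have gcl: "norm (g (u s) - c) \<le> \<epsilon>" if s: "0 < s" "s \<le> \<delta>" for s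
  proof -
    have "s < b" using s b(1) by (simp add: \<delta>_def)
    then show ?thesis using b(2)[OF s(1)] by (simp add: dist_norm)
  qed
  have E1: "norm (du r - (r / real n) *\<^sub>R c) \<le> \<epsilon> * r" if r: "0 < r" "r \<le> \<delta>" for r
  proof -
    define F where "F = (\<lambda>s. s^Suc m *\<^sub>R du s - (s^n / real n) *\<^sub>R c)"
    have dF: "(F has_vector_derivative s^Suc m *\<^sub>R (g (u s) - c)) (at s)" if s: "s > 0" for s
    proof -
      have dp: "((\<lambda>s. s^n / real n) has_real_derivative s^Suc m) (at s)"
        using DERIV_cdivide[OF DERIV_pow[of n s UNIV], of "real n"] np by (simp add: nm)
      have dc: "((\<lambda>s. (s^n / real n) *\<^sub>R c) has_vector_derivative s^Suc m *\<^sub>R c) (at s)"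
        using has_vector_derivative_scaleR[OF dp has_vector_derivative_const[of c]] by simp
      have "(F has_vector_derivative s^Suc m *\<^sub>R g (u s) - s^Suc m *\<^sub>R c) (at s)"
        unfolding F_def by (intro has_vector_derivative_diff hS s dc)
      then show ?thesis by (simp add: scaleR_diff_right)
    qed
    have "norm (F r - 0) \<le> (r^Suc m * \<epsilon>) * (r - 0)"
    proof (rule lim_bnd)
      have "(F \<longlongrightarrow> 0^Suc m *\<^sub>R 0 - (0^n / real n) *\<^sub>R c) (at_right 0)"
        unfolding F_def by (intro tendsto_intros assms(6)) (use np in simp)
      then show "(F \<longlongrightarrow> 0) (at_right 0)" by (simp add: nm)
      show "0 < r" using r by simp
      fix t assume t: "0 < t" "t < r"
      show "norm (F r - F t) \<le> r^Suc m * \<epsilon> * (r - t)"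
      proof (rule mvt_bnd[OF t(2)])
        fix x assume "t \<le> x" "x \<le> r"
        then show "(F has_vector_derivative x^Suc m *\<^sub>R (g (u x) - c)) (at x)" using t by (intro dF) auto
      next
        fix x assume x: "t < x" "x < r"
        have "norm (g (u x) - c) \<le> \<epsilon>" using x t r by (intro gcl) auto
        moreover have "x^Suc m \<le> r^Suc m" using x t by (intro power_mono) auto
        ultimately have "x^Suc m * norm (g (u x) - c) \<le> r^Suc m * \<epsilon>"
          using x t e0 by (intro mult_mono) auto
        then show "norm (x^Suc m *\<^sub>R (g (u x) - c)) \<le> r^Suc m * \<epsilon>" using x t by simp
      qed
    qed
    moreover have "r^n / real n = r^Suc m * (r / real n)" by (simp add: nm)
    then have "F r = r^Suc m *\<^sub>R (du r - (r / real n) *\<^sub>R c)"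
      unfolding F_def by (simp add: scaleR_diff_right)
    ultimately have "r^Suc m * norm (du r - (r / real n) *\<^sub>R c) \<le> r^Suc m * (\<epsilon> * r)"
      using r by (simp add: mult_ac)
    then show ?thesis using r by (simp add: mult_le_cancel_left)
  qed
  have E2: "norm (u r - u0 - (r^2 / (2 * real n)) *\<^sub>R c) \<le> \<epsilon> * r * r" if r: "0 < r" "r \<le> \<delta>" for r
  proof -
    define G where "G = (\<lambda>s. u s - (s^2 / (2 * real n)) *\<^sub>R c)"
    have dG: "(G has_vector_derivative du s - (s / real n) *\<^sub>R c) (at s)" if s: "s > 0" for s
    proof -
      have dp: "((\<lambda>s. s^2 / (2 * real n)) has_real_derivative s / real n) (at s)"
        using np by (auto intro!: derivative_eq_intros simp: field_simps)
      have dc: "((\<lambda>s. (s^2 / (2 * real n)) *\<^sub>R c) has_vector_derivative (s / real n) *\<^sub>R c) (at s)"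
        using has_vector_derivative_scaleR[OF dp has_vector_derivative_const[of c]] by simp
      show ?thesis unfolding G_def by (intro has_vector_derivative_diff hu s dc)
    qed
    have "norm (G r - u0) \<le> (\<epsilon> * r) * (r - 0)"
    proof (rule lim_bnd)
      have "(G \<longlongrightarrow> u0 - (0^2 / (2 * real n)) *\<^sub>R c) (at_right 0)"
        unfolding G_def by (intro tendsto_intros assms(5)) (use np in simp)
      then show "(G \<longlongrightarrow> u0) (at_right 0)" by simp
      show "0 < r" using r by simp
      fix t assume t: "0 < t" "t < r"
      show "norm (G r - G t) \<le> \<epsilon> * r * (r - t)"
      proof (rule mvt_bnd[OF t(2)])
        fix x assume "t \<le> x" "x \<le> r"
        then show "(G has_vector_derivative du x - (x / real n) *\<^sub>R c) (at x)" using t by (intro dG) auto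
      next
        fix x assume x: "t < x" "x < r"
        have "norm (du x - (x / real n) *\<^sub>R c) \<le> \<epsilon> * x" using x t r by (intro E1) auto
        also have "\<dots> \<le> \<epsilon> * r" using x e0 by (intro mult_left_mono) auto
        finally show "norm (du x - (x / real n) *\<^sub>R c) \<le> \<epsilon> * r" .
      qed
    qed
    then show ?thesis by (simp add: G_def algebra_simps)
  qed
  have nc: "norm ((r / real n) *\<^sub>R c) = r * a" if "r > 0" for r
    using that np by (simp add: a_def)
  have dul: "norm (du r) \<ge> r * (a - \<epsilon>)" if r: "0 < r" "r \<le> \<delta>" for r
  proof -
    have "norm ((r / real n) *\<^sub>R c) - norm (du r) \<le> norm ((r / real n) *\<^sub>R c - du r)"
      by (rule norm_triangle_ineq2)
    also have "\<dots> = norm (du r - (r / real n) *\<^sub>R c)" by (rule norm_minus_commute)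
    also have "\<dots> \<le> \<epsilon> * r" using E1[OF r] .
    finally show ?thesis using nc[OF r(1)] by (simp add: algebra_simps)
  qed
  have duu: "norm (du r) \<le> r * (a + \<epsilon>)" if r: "0 < r" "r \<le> \<delta>" for r
  proof -
    have "norm (du r) \<le> norm (du r - (r / real n) *\<^sub>R c) + norm ((r / real n) *\<^sub>R c)"
      by (metis diff_add_cancel norm_triangle_ineq)
    then show ?thesis using E1[OF r] nc[OF r(1)] by (simp add: algebra_simps)
  qed
  have cc: "c \<bullet> c = norm c * norm c" by (simp add: power2_norm_eq_inner[symmetric] power2_eq_square)
  define \<phi> where "\<phi> = (\<lambda>s. (u s - u0) \<bullet> c)"
  have phip: "\<phi> s > 0" if s: "0 < s" "s \<le> \<delta>" for s
  proof -
    define w where "w = u s - u0 - (s^2 / (2 * real n)) *\<^sub>R c"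
    have "\<phi> s = w \<bullet> c + (s^2 / (2 * real n)) * (c \<bullet> c)"
      by (simp add: \<phi>_def w_def inner_diff_left)
    moreover have "w \<bullet> c \<ge> - (\<epsilon> * s * s * norm c)"
    proof -
      have "\<bar>w \<bullet> c\<bar> \<le> norm w * norm c" by (rule Cauchy_Schwarz_ineq2)
      also have "\<dots> \<le> \<epsilon> * s * s * norm c" using E2[OF s] by (simp add: w_def mult_right_mono)
      finally show ?thesis by linarith
    qed
    moreover have "(s^2 / (2 * real n)) * (c \<bullet> c) = s * s * norm c * (a / 2)"
      using np by (simp add: cc cn power2_eq_square)
    ultimately have "\<phi> s \<ge> s * s * norm c * (a / 2 - \<epsilon>)" by (simp add: algebra_simps)
    moreover have "s * s * norm c * (a / 2 - \<epsilon>) > 0" using s c0 a0 by (simp add: \<epsilon>_def)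
    ultimately show ?thesis by linarith
  qed
  have dphi: "(\<phi> has_real_derivative du s \<bullet> c) (at s)" if s: "s > 0" for s
  proof -
    have "((\<lambda>s. (u s - u0) \<bullet> c) has_vector_derivative (du s - 0) \<bullet> c) (at s)"
      by (intro bounded_linear.has_vector_derivative[OF bounded_linear_inner_left]
          has_vector_derivative_diff hu s has_vector_derivative_const)
    then show ?thesis by (simp add: \<phi>_def has_real_derivative_iff_has_vector_derivative)
  qed
  have phid: "du s \<bullet> c > 0" if s: "0 < s" "s \<le> \<delta>" for s
  proof -
    define w where "w = du s - (s / real n) *\<^sub>R c"
    have "du s \<bullet> c = w \<bullet> c + (s / real n) * (c \<bullet> c)"
      by (simp add: w_def inner_diff_left)
    moreover have "w \<bullet> c \<ge> - (\<epsilon> * s * norm c)"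
    proof -
      have "\<bar>w \<bullet> c\<bar> \<le> norm w * norm c" by (rule Cauchy_Schwarz_ineq2)
      also have "\<dots> \<le> \<epsilon> * s * norm c" using E1[OF s] by (simp add: w_def mult_right_mono)
      finally show ?thesis by linarith
    qed
    moreover have "(s / real n) * (c \<bullet> c) = s * norm c * a"
      using np by (simp add: cc cn)
    ultimately have "du s \<bullet> c \<ge> s * norm c * (a - \<epsilon>)" by (simp add: algebra_simps)
    moreover have "s * norm c * (a - \<epsilon>) > 0" using s c0 a0 by (simp add: \<epsilon>_def)
    ultimately show ?thesis by linarith
  qed
  have phimono: "\<phi> s < \<phi> t" if st: "0 < s" "s < t" "t \<le> \<delta>" for s t
    using st by (intro DERIV_pos_imp_increasing[OF st(2)]) (auto intro!: exI dphi phid)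
  have inj_lt: "u r1 \<noteq> u r2" if rr: "0 \<le> r1" "r1 < r2" "r2 \<le> \<delta>" for r1 r2
  proof (cases "r1 = 0")
    case True
    then show ?thesis using phip[of r2] rr assms(7) by (auto simp: \<phi>_def)
  next
    case False
    then show ?thesis using phimono[of r1 r2] rr by (auto simp: \<phi>_def)
  qed
  have inj: "r1 = r2" if rr: "0 \<le> r1" "r1 \<le> \<delta>" "0 \<le> r2" "r2 \<le> \<delta>" "u r1 = u r2" for r1 r2
    using inj_lt[of r1 r2] inj_lt[of r2 r1] rr by (metis linorder_neqE_linordered_idom)
  define E where "E = (\<lambda>s. (du s \<bullet> du s) / 2 - V (u s))"
  have dE: "(E has_real_derivative - (real m + 1) / s * (du s \<bullet> du s)) (at s)" if s: "s > 0" for s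
  proof -
    define d' where "d' = (- (real m + 1) / s) *\<^sub>R du s + g (u s)"
    have d1: "((\<lambda>s. du s \<bullet> du s) has_real_derivative (du s \<bullet> d' + d' \<bullet> du s)) (at s)"
      unfolding has_real_derivative_iff_has_vector_derivative d'_def
      by (rule bounded_bilinear.has_vector_derivative[OF bounded_bilinear_inner hdu[OF s] hdu[OF s]])
    have d2: "((\<lambda>s. V (u s)) has_real_derivative g (u s) \<bullet> du s) (at s)"
    proof -
      have "((V \<circ> u) has_derivative (frechet_derivative V (at (u s)) \<circ> (\<lambda>h. h *\<^sub>R du s))) (at s)"
        using hu[OF s] Vd[of "u s"]
        by (intro diff_chain_at) (auto simp: has_vector_derivative_def frechet_derivative_works[symmetric])
      moreover have "(frechet_derivative V (at (u s)) \<circ> (\<lambda>h. h *\<^sub>R du s)) = (\<lambda>h. (g (u s) \<bullet> du s) * h)"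
        by (rule ext) (simp add: grad_inner[OF Vd] g_def)
      ultimately show ?thesis by (simp add: has_field_derivative_def comp_def)
    qed
    have "(E has_real_derivative (du s \<bullet> d' + d' \<bullet> du s) / 2 - g (u s) \<bullet> du s) (at s)"
      unfolding E_def using DERIV_diff[OF DERIV_cdivide[OF d1, of 2] d2] by simp
    moreover have "(du s \<bullet> d' + d' \<bullet> du s) / 2 - g (u s) \<bullet> du s = - (real m + 1) / s * (du s \<bullet> du s)"
      using s by (simp add: d'_def inner_add_right inner_add_left inner_commute[of "g (u s)"] field_simps)
    ultimately show ?thesis by simp
  qed
  have Emono: "E y \<le> E x" if xy: "0 < x" "x \<le> y" for x y
  proof (rule DERIV_nonpos_imp_nonincreasing[OF xy(2)])
    fix z assume z: "x \<le> z" "z \<le> y"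
    have "- (real m + 1) / z * (du z \<bullet> du z) \<le> 0"
      using z xy by (intro mult_nonpos_nonneg divide_nonpos_pos) auto
    then show "\<exists>y. (E has_real_derivative y) (at z) \<and> y \<le> 0" using dE[of z] z xy by auto
  qed
  define Q where "Q = (real m + 1) * (a - \<epsilon>)^2 / 2"
  have Q0: "Q > 0" using a0 by (simp add: Q_def \<epsilon>_def)
  have Hb: "E \<delta> + Q * (\<delta>^2 - t^2) \<le> E t" if t: "0 < t" "t \<le> \<delta>" for t
  proof -
    have "E \<delta> + Q * \<delta>^2 \<le> E t + Q * t^2"
    proof (rule DERIV_nonpos_imp_nonincreasing[OF t(2), where f = "\<lambda>s. E s + Q * s^2"])
      fix z assume z: "t \<le> z" "z \<le> \<delta>"
      have zp: "z > 0" using z t by simp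
      have "(z * (a - \<epsilon>))^2 \<le> (norm (du z))^2"
        using dul[of z] z zp a0 by (intro power_mono) (auto simp: \<epsilon>_def)
      then have dd: "z * z * (a - \<epsilon>)^2 \<le> du z \<bullet> du z"
        by (simp only: power2_norm_eq_inner power_mult_distrib power2_eq_square[of z])
      have "(real m + 1) * z * (a - \<epsilon>)^2 \<le> (real m + 1) / z * (du z \<bullet> du z)"
      proof -
        have "(real m + 1) / z * (z * z * (a - \<epsilon>)^2) \<le> (real m + 1) / z * (du z \<bullet> du z)"
          using dd zp by (intro mult_left_mono) auto
        moreover have "(real m + 1) / z * (z * z * (a - \<epsilon>)^2) = (real m + 1) * z * (a - \<epsilon>)^2"
          using zp by (simp add: field_simps)
        ultimately show ?thesis by linarith
      qed
      then have le: "- (real m + 1) / z * (du z \<bullet> du z) + Q * (2 * z) \<le> 0"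
      proof -
        have "Q * (2 * z) = (real m + 1) * z * (a - \<epsilon>)^2" by (simp add: Q_def)
        moreover have "- (real m + 1) / z * (du z \<bullet> du z) = - ((real m + 1) / z * (du z \<bullet> du z))" by (simp only: minus_divide_left[symmetric] mult_minus_left)
        ultimately show ?thesis using \<open>(real m + 1) * z * (a - \<epsilon>)^2 \<le> (real m + 1) / z * (du z \<bullet> du z)\<close> by linarith
      qed
      have "((\<lambda>s. E s + Q * s^2) has_real_derivative - (real m + 1) / z * (du z \<bullet> du z) + Q * (2 * z)) (at z)"
        by (auto intro!: derivative_eq_intros dE zp)
      then show "\<exists>y. ((\<lambda>s. E s + Q * s^2) has_real_derivative y) (at z) \<and> y \<le> 0"
        using le by blast
    qed
    then show ?thesis by (simp add: algebra_simps)
  qed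
  show ?thesis
  proof (intro exI[of _ "\<delta>/2"] conjI ballI allI impI)
    show "\<delta>/2 > 0" using d0 by simp
  next
    fix r assume r: "r \<in> {0<..<\<delta>/2}"
    have "norm (du r) \<ge> r * (a - \<epsilon>)" using r by (intro dul) auto
    moreover have "r * (a - \<epsilon>) > 0" using r a0 by (simp add: \<epsilon>_def)
    ultimately show "du r \<noteq> 0" by auto
  next
    fix rs r assume rs: "rs \<in> {0..<\<delta>/2}" and r: "r \<ge> 0" "u r = u rs"
    show "r = rs"
    proof (cases "r \<le> \<delta>")
      case True
      then show ?thesis using inj[of r rs] rs r by auto
    next
      case False
      have Er: "E r \<le> E \<delta>" using False d0 by (intro Emono) auto
      have Er2: "E r \<ge> - V (u rs)" using r(2) by (simp add: E_def)
      show ?thesis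
      proof (cases "rs = 0")
        case True
        have l0: "((\<lambda>x. du x \<bullet> du x) \<longlongrightarrow> 0) (at_right 0)"
          using tendsto_inner[OF assms(6) assms(6)] by simp
        have lim: "(E \<longlongrightarrow> 0 / 2 - V u0) (at_right 0)"
          unfolding E_def
          by (intro tendsto_diff tendsto_divide l0 tendsto_const isCont_tendsto_compose[OF Vc assms(5)]) simp
        have ev: "eventually (\<lambda>t. E \<delta> + Q * (3 * \<delta>^2 / 4) \<le> E t) (at_right 0)"
          unfolding eventually_at_right_field
        proof (intro exI[of _ "\<delta>/2"] conjI allI impI)
          show "(0::real) < \<delta>/2" using d0 by simp
          fix t assume t: "0 < t" "t < \<delta>/2"
          have "t^2 \<le> (\<delta>/2)^2" using t by (intro power_mono) auto
          then have "Q * (3 * \<delta>^2 / 4) \<le> Q * (\<delta>^2 - t^2)"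
            using Q0 by (intro mult_left_mono) (auto simp: power_divide)
          then show "E \<delta> + Q * (3 * \<delta>^2 / 4) \<le> E t" using Hb[of t] t by simp
        qed
        have "E \<delta> + Q * (3 * \<delta>^2 / 4) \<le> 0 / 2 - V u0"
          by (rule tendsto_lowerbound[OF lim ev]) (simp add: trivial_limit_at_right_real)
        moreover have "Q * (3 * \<delta>^2 / 4) > 0" using Q0 d0 by simp
        ultimately show ?thesis using Er Er2 True assms(7) by simp
      next
        case False
        then have rsp: "0 < rs" "rs < \<delta>/2" using rs by auto
        have "E \<delta> + Q * (\<delta>^2 - rs^2) \<le> E rs" using rsp by (intro Hb) auto
        moreover have "du rs \<bullet> du rs \<le> (rs * (a + \<epsilon>))^2"
        proof -
          have "(norm (du rs))^2 \<le> (rs * (a + \<epsilon>))^2" using duu[of rs] rsp d0 by (intro power_mono) auto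
          then show ?thesis by (simp add: power2_norm_eq_inner)
        qed
        ultimately have key: "Q * (\<delta>^2 - rs^2) \<le> (rs * (a + \<epsilon>))^2 / 2"
          using Er Er2 by (simp add: E_def)
        have q1: "Q \<ge> 9 * a^2 / 32" using a0 by (simp add: Q_def \<epsilon>_def power2_eq_square algebra_simps)
        have d2: "\<delta>^2 - rs^2 > 3 * rs^2"
        proof -
          have "(2 * rs)^2 < \<delta>^2" using rsp by (intro power_strict_mono) auto
          then show ?thesis by (simp add: power_mult_distrib)
        qed
        have "Q * (\<delta>^2 - rs^2) \<ge> 9 * a^2 / 32 * (\<delta>^2 - rs^2)"
          using q1 d2 rsp by (intro mult_right_mono) auto
        moreover have "9 * a^2 / 32 * (\<delta>^2 - rs^2) > 9 * a^2 / 32 * (3 * rs^2)"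
          using d2 a0 by (intro mult_strict_left_mono) auto
        moreover have "(rs * (a + \<epsilon>))^2 / 2 < 9 * a^2 / 32 * (3 * rs^2)"
          using a0 rsp by (simp add: \<epsilon>_def power2_eq_square algebra_simps)
        ultimately show ?thesis using key by linarith
      qed
    qed
  qed
qed

end
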